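(* Let $A$ be an infinitesimal Hopf algebra with counit $\varepsilon$ and antipode $S$. Then: (1) For all $a,b\in A$, $S(ab)=\varepsilon(a)S(b)+\varepsilon(b)S(a)-\varepsilon(a)\varepsilon(b)1$. In particular $S(ab)=0$ whenever $\varepsilon(a)=\varepsilon(b)=0$. (2) For all $a\in A$, $\Delta(S(a))=S(a)\otimes 1+1\otimes S(a)-\varepsilon(a)1\otimes 1$. In particular, if $\varepsilon(a)=0$ then $S(a)$ is primitive, i.e. $\Delta(S(a))=S(a)\otimes 1+1\otimes S(a)$.
   Context: An infinitesimal bialgebra over a field $K$ is a $K$-vector space $A$ that is an associative unital algebra (product $m$, unit $1$) and a coassociative counital coalgebra (coproduct $\Delta$, counit $\varepsilon$) such that for all $a,b\in A$: $\Delta(ab)=\Delta(a)(1\otimes b)+(a\otimes 1)\Delta(b)-a\otimes b$. On the space $\mathcal{L}(A)$ of linear endomorphisms of $A$, the convolution product is $f\star g=m\circ(f\otimes g)\circ\Delta$, with unit $\nu\circ\varepsilon$, where $\nu(\lambda)=\lambda 1$. $A$ is an infinitesimal Hopf algebra if $\mathrm{Id}_A$ has an inverse $S$ for $\star$; $S$ is called the antipode. *)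

theory Defs
  imports Main "HOL.Vector_Spaces"
begin

text \<open>Elements of A \<otimes> A (resp. A \<otimes> A \<otimes> A) are represented by finite lists of
  pairs (resp. triples) standing for sums of elementary tensors.  Over a field K,
  two such sums represent the same tensor iff they agree under every K-bilinear
  (resp. trilinear) form; this is used as tensor equality.\<close>

definition bilinear_form :: "('k::field \<Rightarrow> 'a::ab_group_add \<Rightarrow> 'a) \<Rightarrow> ('a \<Rightarrow> 'a \<Rightarrow> 'k) \<Rightarrow> bool" where
  "bilinear_form scale \<beta> \<longleftrightarrow>
     (\<forall>x. Vector_Spaces.linear scale (*) (\<beta> x)) \<and>
     (\<forall>y. Vector_Spaces.linear scale (*) (\<lambda>x. \<beta> x y))"

definition trilinear_form :: "('k::field \<Rightarrow> 'a::ab_group_add \<Rightarrow> 'a) \<Rightarrow> ('a \<Rightarrow> 'a \<Rightarrow> 'a \<Rightarrow> 'k) \<Rightarrow> bool" where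
  "trilinear_form scale \<tau> \<longleftrightarrow>
     (\<forall>x y. Vector_Spaces.linear scale (*) (\<tau> x y)) \<and>
     (\<forall>x z. Vector_Spaces.linear scale (*) (\<lambda>y. \<tau> x y z)) \<and>
     (\<forall>y z. Vector_Spaces.linear scale (*) (\<lambda>x. \<tau> x y z))"

definition tens_eq2 :: "('k::field \<Rightarrow> 'a::ab_group_add \<Rightarrow> 'a) \<Rightarrow> ('a \<times> 'a) list \<Rightarrow> ('a \<times> 'a) list \<Rightarrow> bool" where
  "tens_eq2 scale s t \<longleftrightarrow>
     (\<forall>\<beta>. bilinear_form scale \<beta> \<longrightarrow>
        sum_list (map (\<lambda>(x, y). \<beta> x y) s) = sum_list (map (\<lambda>(x, y). \<beta> x y) t))"

definition tens_eq3 :: "('k::field \<Rightarrow> 'a::ab_group_add \<Rightarrow> 'a) \<Rightarrow> ('a \<times> 'a \<times> 'a) list \<Rightarrow> ('a \<times> 'a \<times> 'a) list \<Rightarrow> bool" where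
  "tens_eq3 scale s t \<longleftrightarrow>
     (\<forall>\<tau>. trilinear_form scale \<tau> \<longrightarrow>
        sum_list (map (\<lambda>(x, y, z). \<tau> x y z) s) = sum_list (map (\<lambda>(x, y, z). \<tau> x y z) t))"

definition conv :: "('a \<Rightarrow> ('a \<times> 'a) list) \<Rightarrow> ('a \<Rightarrow> 'a::ring_1) \<Rightarrow> ('a \<Rightarrow> 'a) \<Rightarrow> 'a \<Rightarrow> 'a" where
  "conv Delta f g a = sum_list (map (\<lambda>(x, y). f x * g y) (Delta a))"

locale inf_bialgebra = vector_space scale
  for scale :: "'k::field \<Rightarrow> 'a::ring_1 \<Rightarrow> 'a" +
  fixes Delta :: "'a \<Rightarrow> ('a \<times> 'a) list"
    and eps :: "'a \<Rightarrow> 'k"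
  assumes scale_mult_left: "scale c (a * b) = scale c a * b"
    and scale_mult_right: "scale c (a * b) = a * scale c b"
    and Delta_add: "tens_eq2 scale (Delta (a + b)) (Delta a @ Delta b)"
    and Delta_scale: "tens_eq2 scale (Delta (scale c a)) (map (\<lambda>(x, y). (scale c x, y)) (Delta a))"
    and eps_linear: "Vector_Spaces.linear scale (*) eps"
    and coassoc: "tens_eq3 scale
        (concat (map (\<lambda>(x, y). map (\<lambda>(p, q). (p, q, y)) (Delta x)) (Delta a)))
        (concat (map (\<lambda>(x, y). map (\<lambda>(p, q). (x, p, q)) (Delta y)) (Delta a)))"
    and counit_left: "sum_list (map (\<lambda>(x, y). scale (eps x) y) (Delta a)) = a"
    and counit_right: "sum_list (map (\<lambda>(x, y). scale (eps y) x) (Delta a)) = a"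
    and infinitesimal: "tens_eq2 scale (Delta (a * b))
        (map (\<lambda>(x, y). (x, y * b)) (Delta a) @ map (\<lambda>(x, y). (a * x, y)) (Delta b) @ [(- a, b)])"

locale inf_hopf = inf_bialgebra scale Delta eps
  for scale :: "'k::field \<Rightarrow> 'a::ring_1 \<Rightarrow> 'a" and Delta eps +
  fixes S :: "'a \<Rightarrow> 'a"
  assumes S_linear: "Vector_Spaces.linear scale scale S"
    and antipode_right: "conv Delta id S = (\<lambda>a. scale (eps a) 1)"
    and antipode_left: "conv Delta S id = (\<lambda>a. scale (eps a) 1)"

end

theory Submission
  imports Defs
begin

lemma hom_sl:
  assumes "\<And>x y. h (x + y) = h x + h y" "h 0 = 0"
  shows "h (sum_list (map f l)) = sum_list (map (\<lambda>p. h (f p)) l)"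
  by (induction l) (auto simp: assms)

lemma sl_concat: "sum_list (concat xs) = sum_list (map sum_list (xs :: 'b::monoid_add list list))"
  by (induction xs) auto

lemma field_vs: "vector_space ((*) :: 'k::field \<Rightarrow> 'k \<Rightarrow> 'k)"
  by unfold_locales (auto simp: algebra_simps)

context inf_bialgebra
begin

lemma linK_iff: "Vector_Spaces.linear scale (*) f \<longleftrightarrow>
   (\<forall>x y. f (x + y) = f x + f y) \<and> (\<forall>c x. f (scale c x) = c * f x)"
  using linear_iff[of scale "(*)" f] field_vs vector_space_axioms by auto

lemma linA_iff: "Vector_Spaces.linear scale scale f \<longleftrightarrow>
   (\<forall>x y. f (x + y) = f x + f y) \<and> (\<forall>c x. f (scale c x) = scale c (f x))"
  using linear_iff[of scale scale f] vector_space_axioms by auto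

lemma linK_0: "Vector_Spaces.linear scale (*) f \<Longrightarrow> f 0 = 0"
  by (metis add_cancel_right_right linK_iff add_0)

lemma linA_0: "Vector_Spaces.linear scale scale f \<Longrightarrow> f 0 = 0"
  by (metis add_cancel_right_right linA_iff add_0)

lemma linK_sl: "Vector_Spaces.linear scale (*) f \<Longrightarrow>
   f (sum_list (map g l)) = sum_list (map (\<lambda>p. f (g p)) l)"
  by (rule hom_sl) (auto simp: linK_iff linK_0)

lemma linA_sl: "Vector_Spaces.linear scale scale f \<Longrightarrow>
   f (sum_list (map g l)) = sum_list (map (\<lambda>p. f (g p)) l)"
  by (rule hom_sl) (auto simp: linA_iff linA_0)

lemma linK_neg: "Vector_Spaces.linear scale (*) f \<Longrightarrow> f (- x) = - f x"
  by (metis add_eq_0_iff2 linK_0 linK_iff)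

lemma linA_neg: "Vector_Spaces.linear scale scale f \<Longrightarrow> f (- x) = - f x"
  by (metis add_eq_0_iff2 linA_0 linA_iff)

lemma linK_diff: "Vector_Spaces.linear scale (*) f \<Longrightarrow> f (x - y) = f x - f y"
  by (metis diff_conv_add_uminus linK_iff linK_neg)

lemma linA_diff: "Vector_Spaces.linear scale scale f \<Longrightarrow> f (x - y) = f x - f y"
  by (metis diff_conv_add_uminus linA_iff linA_neg)

lemma sep:
  assumes "\<And>\<phi>. Vector_Spaces.linear scale (*) \<phi> \<Longrightarrow> \<phi> x = \<phi> y"
  shows "x = y"
proof (rule ccontr)
  assume ne: "x \<noteq> y"
  let ?z = "x - y"
  have z: "?z \<noteq> 0" using ne by simp
  have ind: "independent {?z}" using z by simp
  let ?B = "extend_basis {?z}"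
  have "Vector_Spaces.linear scale (*) (\<lambda>v. representation ?B v ?z)"
    by (rule linear_representation) (auto simp: independent_extend_basis[OF ind] span_extend_basis[OF ind])
  then have "representation ?B x ?z - representation ?B y ?z = representation ?B ?z ?z"
    using linK_diff by metis
  also have "\<dots> = 1"
    using extend_basis_superset[OF ind] by (subst representation_basis) (auto simp: independent_extend_basis[OF ind] span_extend_basis[OF ind])
  finally show False using assms[OF \<open>Vector_Spaces.linear scale (*) (\<lambda>v. representation ?B v ?z)\<close>] by simp
qed

definition bilA :: "('a \<Rightarrow> 'a \<Rightarrow> 'a) \<Rightarrow> bool" where
  "bilA f \<longleftrightarrow> (\<forall>x. Vector_Spaces.linear scale scale (f x)) \<and> (\<forall>y. Vector_Spaces.linear scale scale (\<lambda>x. f x y))"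

definition trilA :: "('a \<Rightarrow> 'a \<Rightarrow> 'a \<Rightarrow> 'a) \<Rightarrow> bool" where
  "trilA f \<longleftrightarrow> (\<forall>x y. Vector_Spaces.linear scale scale (f x y)) \<and>
     (\<forall>x z. Vector_Spaces.linear scale scale (\<lambda>y. f x y z)) \<and>
     (\<forall>y z. Vector_Spaces.linear scale scale (\<lambda>x. f x y z))"

lemma comp_linK: "Vector_Spaces.linear scale scale g \<Longrightarrow> Vector_Spaces.linear scale (*) \<phi> \<Longrightarrow>
   Vector_Spaces.linear scale (*) (\<lambda>x. \<phi> (g x))"
  by (auto simp: linK_iff linA_iff)

lemma bilA_comp: "bilA f \<Longrightarrow> Vector_Spaces.linear scale (*) \<phi> \<Longrightarrow> bilinear_form scale (\<lambda>x y. \<phi> (f x y))"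
  unfolding bilA_def bilinear_form_def by (auto intro: comp_linK)

lemma trilA_comp: "trilA f \<Longrightarrow> Vector_Spaces.linear scale (*) \<phi> \<Longrightarrow> trilinear_form scale (\<lambda>x y z. \<phi> (f x y z))"
  unfolding trilA_def trilinear_form_def by (auto intro: comp_linK)

lemma app2A:
  assumes "tens_eq2 scale s t" "bilA f"
  shows "sum_list (map (\<lambda>(x, y). f x y) s) = sum_list (map (\<lambda>(x, y). f x y) t)"
proof (rule sep)
  fix \<phi> assume l: "Vector_Spaces.linear scale (*) \<phi>"
  have "bilinear_form scale (\<lambda>x y. \<phi> (f x y))" using bilA_comp[OF assms(2) l] .
  then have "sum_list (map (\<lambda>(x, y). \<phi> (f x y)) s) = sum_list (map (\<lambda>(x, y). \<phi> (f x y)) t)"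
    using assms(1) unfolding tens_eq2_def by blast
  then show "\<phi> (sum_list (map (\<lambda>(x, y). f x y) s)) = \<phi> (sum_list (map (\<lambda>(x, y). f x y) t))"
    by (simp add: linK_sl[OF l] split_def)
qed

lemma app3A:
  assumes "tens_eq3 scale s t" "trilA f"
  shows "sum_list (map (\<lambda>(x, y, z). f x y z) s) = sum_list (map (\<lambda>(x, y, z). f x y z) t)"
proof (rule sep)
  fix \<phi> assume l: "Vector_Spaces.linear scale (*) \<phi>"
  have "trilinear_form scale (\<lambda>x y z. \<phi> (f x y z))" using trilA_comp[OF assms(2) l] .
  then have "sum_list (map (\<lambda>(x, y, z). \<phi> (f x y z)) s) = sum_list (map (\<lambda>(x, y, z). \<phi> (f x y z)) t)"
    using assms(1) unfolding tens_eq3_def by blast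
  then show "\<phi> (sum_list (map (\<lambda>(x, y, z). f x y z) s)) = \<phi> (sum_list (map (\<lambda>(x, y, z). f x y z) t))"
    by (simp add: linK_sl[OF l] split_def)
qed

lemma infK:
  assumes "bilinear_form scale \<beta>"
  shows "sum_list (map (\<lambda>(x, y). \<beta> x y) (Delta (a * b))) =
    sum_list (map (\<lambda>(x, y). \<beta> x (y * b)) (Delta a)) + sum_list (map (\<lambda>(x, y). \<beta> (a * x) y) (Delta b)) - \<beta> a b"
proof -
  have l: "Vector_Spaces.linear scale (*) (\<lambda>x. \<beta> x b)" using assms unfolding bilinear_form_def by blast
  show ?thesis
    using infinitesimal[of a b] assms unfolding tens_eq2_def
    by (simp add: linK_neg[OF l] comp_def split_def)
qed

lemma infA:
  assumes "bilA f"
  shows "sum_list (map (\<lambda>(x, y). f x y) (Delta (a * b))) =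
    sum_list (map (\<lambda>(x, y). f x (y * b)) (Delta a)) + sum_list (map (\<lambda>(x, y). f (a * x) y) (Delta b)) - f a b"
proof -
  have l: "Vector_Spaces.linear scale scale (\<lambda>x. f x b)" using assms unfolding bilA_def by blast
  show ?thesis
    using app2A[OF infinitesimal[of a b] assms]
    by (simp add: linA_neg[OF l] comp_def split_def)
qed

lemma coK:
  assumes "trilinear_form scale \<tau>"
  shows "sum_list (map (\<lambda>(x, y). sum_list (map (\<lambda>(p, q). \<tau> p q y) (Delta x))) (Delta a)) =
         sum_list (map (\<lambda>(x, y). sum_list (map (\<lambda>(p, q). \<tau> x p q) (Delta y))) (Delta a))"
  using coassoc[of a] assms unfolding tens_eq3_def
  by (simp add: comp_def split_def map_concat sl_concat)

lemma coA:
  assumes "trilA \<tau>"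
  shows "sum_list (map (\<lambda>(x, y). sum_list (map (\<lambda>(p, q). \<tau> p q y) (Delta x))) (Delta a)) =
         sum_list (map (\<lambda>(x, y). sum_list (map (\<lambda>(p, q). \<tau> x p q) (Delta y))) (Delta a))"
  using app3A[OF coassoc[of a] assms]
  by (simp add: comp_def split_def map_concat sl_concat)

lemma bilA_I:
  assumes "\<And>x y z. f (x + y) z = f x z + f y z" "\<And>c x z. f (scale c x) z = scale c (f x z)"
    "\<And>x y z. f z (x + y) = f z x + f z y" "\<And>c x z. f z (scale c x) = scale c (f z x)"
  shows "bilA f"
  unfolding bilA_def linA_iff using assms by auto

lemma trilA_I:
  assumes "\<And>x y z w. f (x + y) z w = f x z w + f y z w" "\<And>c x z w. f (scale c x) z w = scale c (f x z w)"
    "\<And>x y z w. f z (x + y) w = f z x w + f z y w" "\<And>c x z w. f z (scale c x) w = scale c (f z x w)"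
    "\<And>x y z w. f z w (x + y) = f z w x + f z w y" "\<And>c x z w. f z w (scale c x) = scale c (f z w x)"
  shows "trilA f"
  unfolding trilA_def linA_iff using assms by auto

lemma bilK_I:
  assumes "\<And>x y z. f (x + y) z = f x z + f y z" "\<And>c x z. f (scale c x) z = c * (f x z)"
    "\<And>x y z. f z (x + y) = f z x + f z y" "\<And>c x z. f z (scale c x) = c * (f z x)"
  shows "bilinear_form scale f"
  unfolding bilinear_form_def linK_iff using assms by auto

lemma trilK_I:
  assumes "\<And>x y z w. f (x + y) z w = f x z w + f y z w" "\<And>c x z w. f (scale c x) z w = c * (f x z w)"
    "\<And>x y z w. f z (x + y) w = f z x w + f z y w" "\<And>c x z w. f z (scale c x) w = c * (f z x w)"
    "\<And>x y z w. f z w (x + y) = f z w x + f z w y" "\<And>c x z w. f z w (scale c x) = c * (f z w x)"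
  shows "trilinear_form scale f"
  unfolding trilinear_form_def linK_iff using assms by auto

lemma smL: "scale c x * y = scale c (x * y)" by (simp add: scale_mult_left)
lemma smR: "x * scale c y = scale c (x * y)" by (simp add: scale_mult_right)

lemma eps_add: "eps (x + y) = eps x + eps y" and eps_scale: "eps (scale c x) = c * eps x"
  using eps_linear by (auto simp: linK_iff)

lemma eps_sl: "eps (sum_list (map g l)) = sum_list (map (\<lambda>p. eps (g p)) l)"
  using linK_sl[OF eps_linear] .

lemma scale_sl: "scale c (sum_list (map g l)) = sum_list (map (\<lambda>p. scale c (g p)) l)"
  by (induction l) (auto simp: scale_right_distrib)

lemma scale_sl_left: "scale (sum_list (map g l)) x = sum_list (map (\<lambda>p. scale (g p) x) l)"
  by (induction l) (auto simp: scale_left_distrib)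

lemma cl: "sum_list (map (\<lambda>p. scale (eps (fst p)) (snd p)) (Delta a)) = a"
  using counit_left[of a] by (simp add: split_def)
lemma cr: "sum_list (map (\<lambda>p. scale (eps (snd p)) (fst p)) (Delta a)) = a"
  using counit_right[of a] by (simp add: split_def)

lemma eps_mult: "eps (a * b) = eps a * eps b"
proof -
  have bil: "bilinear_form scale (\<lambda>x y. eps x * eps y)"
    by (rule bilK_I) (auto simp: eps_add eps_scale algebra_simps)
  have 1: "sum_list (map (\<lambda>(x, y). eps x * eps y) (Delta (a * b))) = eps (a * b)"
    using arg_cong[OF cl[of "a*b"], of eps] by (simp add: eps_sl eps_scale split_def)
  have "eps (a * b) = eps (sum_list (map (\<lambda>p. scale (eps (fst p)) (snd p)) (Delta a)) * b)"
    by (simp add: cl)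
  also have "\<dots> = sum_list (map (\<lambda>(x, y). eps x * eps (y * b)) (Delta a))"
    by (simp add: sum_list_mult_const[symmetric] eps_sl smL eps_scale split_def)
  finally have 2: "sum_list (map (\<lambda>(x, y). eps x * eps (y * b)) (Delta a)) = eps (a * b)" by simp
  have "eps (a * b) = eps (a * sum_list (map (\<lambda>p. scale (eps (snd p)) (fst p)) (Delta b)))"
    by (simp add: cr)
  also have "\<dots> = sum_list (map (\<lambda>(x, y). eps (a * x) * eps y) (Delta b))"
    by (simp add: sum_list_const_mult[symmetric] eps_sl smR eps_scale split_def mult.commute)
  finally have 3: "sum_list (map (\<lambda>(x, y). eps (a * x) * eps y) (Delta b)) = eps (a * b)" by simp
  show ?thesis using infK[OF bil, of a b] 1 2 3 by simp
qed

lemma bl1: assumes "bilinear_form scale \<beta>" shows "Vector_Spaces.linear scale (*) (\<lambda>x. \<beta> x y)"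
  using assms unfolding bilinear_form_def by blast
lemma bl2: assumes "bilinear_form scale \<beta>" shows "Vector_Spaces.linear scale (*) (\<beta> x)"
  using assms unfolding bilinear_form_def by blast

lemma bl_add1: "bilinear_form scale \<beta> \<Longrightarrow> \<beta> (x + x') y = \<beta> x y + \<beta> x' y"
  using bl1 linK_iff by metis
lemma bl_scale1: "bilinear_form scale \<beta> \<Longrightarrow> \<beta> (scale c x) y = c * \<beta> x y"
  using bl1 linK_iff by metis
lemma bl_add2: "bilinear_form scale \<beta> \<Longrightarrow> \<beta> y (x + x') = \<beta> y x + \<beta> y x'"
  using bl2 linK_iff by metis
lemma bl_scale2: "bilinear_form scale \<beta> \<Longrightarrow> \<beta> y (scale c x) = c * \<beta> y x"
  using bl2 linK_iff by metis
lemma bl_sl1: "bilinear_form scale \<beta> \<Longrightarrow> \<beta> (sum_list (map g l)) y = sum_list (map (\<lambda>p. \<beta> (g p) y) l)"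
  using linK_sl[OF bl1] by blast
lemma bl_sl2: "bilinear_form scale \<beta> \<Longrightarrow> \<beta> y (sum_list (map g l)) = sum_list (map (\<lambda>p. \<beta> y (g p)) l)"
  using linK_sl[OF bl2] by blast
lemma bl_neg1: "bilinear_form scale \<beta> \<Longrightarrow> \<beta> (- x) y = - \<beta> x y"
  using linK_neg[OF bl1] by blast

definition evD :: "('a \<Rightarrow> 'a \<Rightarrow> 'k) \<Rightarrow> 'a \<Rightarrow> 'k" where
  "evD \<beta> x = sum_list (map (\<lambda>(u, v). \<beta> u v) (Delta x))"

lemma evD_add: "bilinear_form scale \<beta> \<Longrightarrow> evD \<beta> (x + y) = evD \<beta> x + evD \<beta> y"
  using Delta_add[of x y] unfolding tens_eq2_def evD_def by simp

lemma evD_scale: "bilinear_form scale \<beta> \<Longrightarrow> evD \<beta> (scale c x) = c * evD \<beta> x"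
  using Delta_scale[of c x] unfolding tens_eq2_def evD_def
  by (simp add: bl_scale1 split_def comp_def sum_list_const_mult)

lemma evD_lin: "bilinear_form scale \<beta> \<Longrightarrow> Vector_Spaces.linear scale (*) (evD \<beta>)"
  by (simp add: linK_iff evD_add evD_scale)

lemma evD_sl: "bilinear_form scale \<beta> \<Longrightarrow> evD \<beta> (sum_list (map g l)) = sum_list (map (\<lambda>p. evD \<beta> (g p)) l)"
  using linK_sl[OF evD_lin] by blast

lemma evD_one: "bilinear_form scale \<beta> \<Longrightarrow> evD \<beta> 1 = \<beta> 1 1"
  using infK[of \<beta> 1 1] unfolding evD_def by (simp add: split_def)

lemma evD_infK: "bilinear_form scale \<beta> \<Longrightarrow> evD \<beta> (a * b) =
    sum_list (map (\<lambda>(x, y). \<beta> x (y * b)) (Delta a)) + evD (\<lambda>x y. \<beta> (a * x) y) b - \<beta> a b"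
  using infK[of \<beta> a b] unfolding evD_def by simp

lemma bil_leftmul: "bilinear_form scale \<beta> \<Longrightarrow> bilinear_form scale (\<lambda>u z. \<beta> (w * u) z)"
  by (rule bilK_I) (auto simp: bl_add1 bl_add2 bl_scale1 bl_scale2 distrib_left smR)

end

context inf_hopf
begin

lemma S_add: "S (x + y) = S x + S y" and S_scale: "S (scale c x) = scale c (S x)"
  using S_linear by (auto simp: linA_iff)

lemma S_sl: "S (sum_list (map g l)) = sum_list (map (\<lambda>p. S (g p)) l)"
  using linA_sl[OF S_linear] .

lemma S_neg: "S (- x) = - S x" using linA_neg[OF S_linear] .
lemma S_diff: "S (x - y) = S x - S y" using linA_diff[OF S_linear] .

lemma ar: "sum_list (map (\<lambda>p. fst p * S (snd p)) (Delta a)) = scale (eps a) 1"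
  using fun_cong[OF antipode_right, of a] by (simp add: conv_def split_def)
lemma al: "sum_list (map (\<lambda>p. S (fst p) * snd p) (Delta a)) = scale (eps a) 1"
  using fun_cong[OF antipode_left, of a] by (simp add: conv_def split_def)

lemma E1: "sum_list (map (\<lambda>(p, q). p * S (q * b)) (Delta y)) =
   scale (eps y * eps b) 1 - scale (eps b) y + y * S b"
proof -
  have bil: "bilA (\<lambda>x z. x * S z)"
    by (rule bilA_I) (auto simp: distrib_right distrib_left S_add S_scale smL smR)
  have 1: "sum_list (map (\<lambda>(x, z). x * S z) (Delta (y * b))) = scale (eps y * eps b) 1"
    using ar[of "y * b"] by (simp add: split_def eps_mult)
  have 2: "sum_list (map (\<lambda>(x, z). y * x * S z) (Delta b)) = scale (eps b) y"
    using arg_cong[OF ar[of b], of "(*) y"]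
    by (simp add: split_def sum_list_const_mult[symmetric] mult.assoc smR)
  show ?thesis using infA[OF bil, of y b] 1 2 by (simp add: algebra_simps)
qed

lemma part1: "S (a * b) = scale (eps a) (S b) + scale (eps b) (S a) - scale (eps a * eps b) 1"
proof -
  have tril: "trilA (\<lambda>p q y. S p * q * S (y * b))"
    by (rule trilA_I) (auto simp: distrib_right distrib_left S_add S_scale smL smR)
  have "S (a * b) = S (sum_list (map (\<lambda>p. scale (eps (fst p)) (snd p)) (Delta a)) * b)"
    by (simp add: cl)
  also have "\<dots> = sum_list (map (\<lambda>(x, y). scale (eps x) 1 * S (y * b)) (Delta a))"
    by (simp add: sum_list_mult_const[symmetric] S_sl smL S_scale split_def)
  also have "\<dots> = sum_list (map (\<lambda>(x, y). sum_list (map (\<lambda>(p, q). S p * q * S (y * b)) (Delta x))) (Delta a))"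
    by (simp add: al[symmetric] sum_list_mult_const[symmetric] split_def)
  also have "\<dots> = sum_list (map (\<lambda>(x, y). sum_list (map (\<lambda>(p, q). S x * p * S (q * b)) (Delta y))) (Delta a))"
    by (rule coA[OF tril])
  also have "\<dots> = sum_list (map (\<lambda>(x, y). S x * sum_list (map (\<lambda>(p, q). p * S (q * b)) (Delta y))) (Delta a))"
    by (simp add: sum_list_const_mult[symmetric] split_def mult.assoc)
  also have "\<dots> = sum_list (map (\<lambda>(x, y). scale (eps y * eps b) (S x) - scale (eps b) (S x * y) + S x * y * S b) (Delta a))"
    by (simp add: E1 algebra_simps smR)
  also have "\<dots> = scale (eps b) (S a) - scale (eps b) (scale (eps a) 1) + scale (eps a) 1 * S b"
  proof -
    have a1: "sum_list (map (\<lambda>(x, y). scale (eps y * eps b) (S x)) (Delta a)) = scale (eps b) (S a)"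
      using arg_cong[OF cr[of a], of "\<lambda>z. scale (eps b) (S z)"]
      by (simp add: S_sl S_scale scale_sl split_def mult.commute)
    have a2: "sum_list (map (\<lambda>(x, y). scale (eps b) (S x * y)) (Delta a)) = scale (eps b) (scale (eps a) 1)"
      using arg_cong[OF al[of a], of "\<lambda>z. scale (eps b) z"]
      by (simp add: scale_sl split_def)
    have a3: "sum_list (map (\<lambda>(x, y). S x * y * S b) (Delta a)) = scale (eps a) 1 * S b"
      using arg_cong[OF al[of a], of "\<lambda>z. z * S b"]
      by (simp add: sum_list_mult_const[symmetric] split_def)
    show ?thesis
      by (simp add: split_def sum_list_addf sum_list_subtractf)
         (use a1 a2 a3 in \<open>simp add: split_def\<close>)
  qed
  finally show ?thesis by (simp add: smL mult.commute)
qed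

lemma E2:
  assumes rho: "bilinear_form scale \<rho>"
  shows "sum_list (map (\<lambda>(p, q). evD (\<lambda>u z. \<rho> (p * u) z) (S q)) (Delta y)) =
    eps y * \<rho> 1 1 - \<rho> y 1 + sum_list (map (\<lambda>(p, q). \<rho> p (S q)) (Delta y))"
proof -
  have h1: "evD \<rho> (scale (eps y) 1) = eps y * \<rho> 1 1"
    by (simp add: evD_scale[OF rho] evD_one[OF rho])
  have h2: "evD \<rho> (scale (eps y) 1) = sum_list (map (\<lambda>(p, q). evD \<rho> (p * S q)) (Delta y))"
    by (simp add: ar[symmetric] evD_sl[OF rho] split_def)
  have h3: "sum_list (map (\<lambda>(p, q). evD \<rho> (p * S q)) (Delta y)) =
     sum_list (map (\<lambda>(p, q). sum_list (map (\<lambda>(u, v). \<rho> u (v * S q)) (Delta p))) (Delta y))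
     + sum_list (map (\<lambda>(p, q). evD (\<lambda>u z. \<rho> (p * u) z) (S q)) (Delta y))
     - sum_list (map (\<lambda>(p, q). \<rho> p (S q)) (Delta y))"
    by (simp add: evD_infK[OF rho] split_def sum_list_addf sum_list_subtractf)
  have tril: "trilinear_form scale (\<lambda>a b c. \<rho> a (b * S c))"
    by (rule trilK_I) (auto simp: bl_add1[OF rho] bl_add2[OF rho] bl_scale1[OF rho] bl_scale2[OF rho]
        distrib_left distrib_right S_add S_scale smL smR)
  have h4: "sum_list (map (\<lambda>(p, q). sum_list (map (\<lambda>(u, v). \<rho> u (v * S q)) (Delta p))) (Delta y)) = \<rho> y 1"
  proof -
    have "sum_list (map (\<lambda>(p, q). sum_list (map (\<lambda>(u, v). \<rho> u (v * S q)) (Delta p))) (Delta y))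
      = sum_list (map (\<lambda>(p, q). sum_list (map (\<lambda>(u, v). \<rho> p (u * S v)) (Delta q))) (Delta y))"
      by (rule coK[OF tril])
    also have "\<dots> = sum_list (map (\<lambda>(p, q). eps q * \<rho> p 1) (Delta y))"
      by (simp add: bl_sl2[OF rho, symmetric] split_def ar bl_scale2[OF rho])
    also have "\<dots> = \<rho> y 1"
      by (subst (2) cr[of y, symmetric]) (simp add: bl_sl1[OF rho] bl_scale1[OF rho] split_def)
    finally show ?thesis .
  qed
  show ?thesis using h1 h2 h3 h4 by (simp add: algebra_simps)
qed

lemma part2:
  assumes beta: "bilinear_form scale \<beta>"
  shows "evD \<beta> (S a) = \<beta> (S a) 1 + \<beta> 1 (S a) + \<beta> (- scale (eps a) 1) 1"
proof -
  define \<gamma> where "\<gamma> u y = evD (\<lambda>p z. \<beta> (u * p) z) (S y)" for u y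
  have bw: "\<And>w. bilinear_form scale (\<lambda>p z. \<beta> (w * p) z)" by (rule bil_leftmul[OF beta])
  have g_add1: "\<gamma> (u + u') y = \<gamma> u y + \<gamma> u' y" for u u' y
    by (simp add: \<gamma>_def evD_def distrib_right bl_add1[OF beta] split_def sum_list_addf)
  have g_scale1: "\<gamma> (scale c u) y = c * \<gamma> u y" for c u y
    by (simp add: \<gamma>_def evD_def smL bl_scale1[OF beta] split_def sum_list_const_mult)
  have g_add2: "\<gamma> u (y + y') = \<gamma> u y + \<gamma> u y'" for u y y'
    by (simp add: \<gamma>_def S_add evD_add[OF bw])
  have g_scale2: "\<gamma> u (scale c y) = c * \<gamma> u y" for c u y
    by (simp add: \<gamma>_def S_scale evD_scale[OF bw])
  have g1: "\<gamma> 1 y = evD \<beta> (S y)" for y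
    by (simp add: \<gamma>_def)
  have gbil: "bilinear_form scale \<gamma>"
    by (rule bilK_I) (auto simp: g_add1 g_add2 g_scale1 g_scale2)
  have tril: "trilinear_form scale (\<lambda>p q y. \<gamma> (S p * q) y)"
    by (rule trilK_I) (auto simp: g_add1 g_add2 g_scale1 g_scale2 S_add S_scale smL smR distrib_left distrib_right)
  have "evD \<beta> (S a) = sum_list (map (\<lambda>(x, y). \<gamma> (scale (eps x) 1) y) (Delta a))"
    apply (subst (1) cl[of a, symmetric])
    by (simp add: S_sl evD_sl[OF beta] S_scale evD_scale[OF beta] g_scale1 split_def g1)
  also have "\<dots> = sum_list (map (\<lambda>(x, y). sum_list (map (\<lambda>(p, q). \<gamma> (S p * q) y) (Delta x))) (Delta a))"
    by (simp add: al[symmetric] bl_sl1[OF gbil] split_def)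
  also have "\<dots> = sum_list (map (\<lambda>(x, y). sum_list (map (\<lambda>(p, q). \<gamma> (S x * p) q) (Delta y))) (Delta a))"
    by (rule coK[OF tril])
  also have "\<dots> = sum_list (map (\<lambda>(x, y). eps y * \<beta> (S x) 1 - \<beta> (S x * y) 1
       + sum_list (map (\<lambda>(p, q). \<beta> (S x * p) (S q)) (Delta y))) (Delta a))"
    using E2[OF bw] by (simp add: \<gamma>_def mult.assoc split_def)
  also have "\<dots> = \<beta> (S a) 1 + \<beta> 1 (S a) + \<beta> (- scale (eps a) 1) 1"
  proof -
    have a1: "sum_list (map (\<lambda>(x, y). eps y * \<beta> (S x) 1) (Delta a)) = \<beta> (S a) 1"
      by (subst (2) cr[of a, symmetric]) (simp add: S_sl S_scale bl_sl1[OF beta] bl_scale1[OF beta] split_def)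
    have a2: "sum_list (map (\<lambda>(x, y). \<beta> (S x * y) 1) (Delta a)) = \<beta> (scale (eps a) 1) 1"
      by (simp add: al[symmetric] bl_sl1[OF beta] split_def)
    have tril2: "trilinear_form scale (\<lambda>x p q. \<beta> (S x * p) (S q))"
      by (rule trilK_I) (auto simp: bl_add1[OF beta] bl_add2[OF beta] bl_scale1[OF beta] bl_scale2[OF beta]
        S_add S_scale smL smR distrib_left distrib_right)
    have a3: "sum_list (map (\<lambda>(x, y). sum_list (map (\<lambda>(p, q). \<beta> (S x * p) (S q)) (Delta y))) (Delta a))
       = \<beta> 1 (S a)"
    proof -
      have "sum_list (map (\<lambda>(x, y). sum_list (map (\<lambda>(p, q). \<beta> (S x * p) (S q)) (Delta y))) (Delta a))
        = sum_list (map (\<lambda>(x, y). sum_list (map (\<lambda>(p, q). \<beta> (S p * q) (S y)) (Delta x))) (Delta a))"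
        by (rule coK[OF tril2, symmetric])
      also have "\<dots> = sum_list (map (\<lambda>(x, y). eps x * \<beta> 1 (S y)) (Delta a))"
        by (simp add: bl_sl1[OF beta, symmetric] split_def al bl_scale1[OF beta])
      also have "\<dots> = \<beta> 1 (S a)"
        by (subst (2) cl[of a, symmetric]) (simp add: S_sl S_scale bl_sl2[OF beta] bl_scale2[OF beta] split_def)
      finally show ?thesis .
    qed
    show ?thesis
      using a1 a2 a3 by (simp add: split_def sum_list_addf sum_list_subtractf bl_neg1[OF beta])
  qed
  finally show ?thesis .
qed

end

theorem lemma4:
  fixes scale :: "'k::field \<Rightarrow> 'a::ring_1 \<Rightarrow> 'a"
    and Delta :: "'a \<Rightarrow> ('a \<times> 'a) list"
    and eps :: "'a \<Rightarrow> 'k"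
    and S :: "'a \<Rightarrow> 'a"
  assumes "inf_hopf scale Delta eps S"
  shows "(\<forall>a b. S (a * b) = scale (eps a) (S b) + scale (eps b) (S a) - scale (eps a * eps b) 1)
    \<and> (\<forall>a b. eps a = 0 \<and> eps b = 0 \<longrightarrow> S (a * b) = 0)
    \<and> (\<forall>a. tens_eq2 scale (Delta (S a)) [(S a, 1), (1, S a), (- scale (eps a) 1, 1)])
    \<and> (\<forall>a. eps a = 0 \<longrightarrow> tens_eq2 scale (Delta (S a)) [(S a, 1), (1, S a)])"
proof -
  interpret inf_hopf scale Delta eps S by (rule assms)
  have p3: "tens_eq2 scale (Delta (S a)) [(S a, 1), (1, S a), (- scale (eps a) 1, 1)]" for a
    unfolding tens_eq2_def
  proof (intro allI impI)
    fix \<beta> :: "'a \<Rightarrow> 'a \<Rightarrow> 'k" assume b: "bilinear_form scale \<beta>"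
    show "sum_list (map (\<lambda>(x, y). \<beta> x y) (Delta (S a))) =
      sum_list (map (\<lambda>(x, y). \<beta> x y) [(S a, 1), (1, S a), (- scale (eps a) 1, 1)])"
      using part2[OF b, of a] by (simp add: evD_def add.assoc)
  qed
  have p4: "tens_eq2 scale (Delta (S a)) [(S a, 1), (1, S a)]" if e: "eps a = 0" for a
    unfolding tens_eq2_def
  proof (intro allI impI)
    fix \<beta> :: "'a \<Rightarrow> 'a \<Rightarrow> 'k" assume b: "bilinear_form scale \<beta>"
    have "\<beta> 0 1 = 0" using bl_scale1[OF b, of 0 0 1] by simp
    then show "sum_list (map (\<lambda>(x, y). \<beta> x y) (Delta (S a))) =
      sum_list (map (\<lambda>(x, y). \<beta> x y) [(S a, 1), (1, S a)])"
      using part2[OF b, of a] e by (simp add: evD_def)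
  qed
  show ?thesis using part1 p3 p4 by simp
qed

end
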